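(* Almost surely, for all $1\le k\le\kappa$, $\mathbf w(e_k)\le\frac{2}{k+2}$. In particular $\kappa\le\frac{2n}{\ln n}$.
   Context: Configuration model: $(d_i^-)_{1\le i\le n}$, $(d_i^+)_{1\le i\le n}$ positive integers with $\sum_id_i^-=\sum_id_i^+=m$; each vertex $i\in V=\{1,\dots,n\}$ carries a set $E_i^+$ of $d_i^+$ tails and a set $E_i^-$ of $d_i^-$ heads; $\omega$ is a uniformly random bijection from tails to heads, $\omega(e)=f$ being an arc from the vertex of $e$ to that of $f$. Assume $\min_i\min(d_i^+,d_i^-)\ge2$; $\Delta:=\max_i\max(d_i^+,d_i^-)$, $h=\lfloor\frac{\ln n}{10\ln\Delta}\rfloor$, $t$ a positive integer, $w_{\min}=\frac{\ln n}{n}$. Exploration from a root $i\in V$: initially $\mathcal T=\{i\}$ and all tails/heads unmatched; $\partial_+\mathcal T$ ($\partial_-\mathcal T$) is the set of unmatched tails (heads) whose vertex lies in $\mathcal T$. For $e\in\partial_+\mathcal T$, the height $\mathbf h(e)$ is the number of vertices on the unique directed path in $\mathcal T$ from $i$ to the vertex of $e$ (including it), and the weight $\mathbf w(e)$ is the inverse product of the out-degrees of those vertices. Iterate: select, among $e\in\partial_+\mathcal T$ with $\mathbf h(e)<t-h$ and $\mathbf w(e)>w_{\min}$, one of maximal weight (ties broken by a fixed deterministic order); match it to a uniformly chosen unmatched head $f$; if $f\notin\partial_-\mathcal T$, add arc $ef$ and the vertex of $f$ to $\mathcal T$. Stop when no such tail exists; $\kappa$ is the total number of pairings, and $e_k$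 is the tail selected at step $k$ (with $\mathbf w(e_k)$ its weight when selected). *)

theory Defs
  imports Complex_Main
begin

text \<open>Configuration model. Vertices are 0..<n. Tail (i,a) with a < dout i belongs to
  vertex i; head (j,b) with b < din j belongs to vertex j.\<close>

definition tails :: "nat \<Rightarrow> (nat \<Rightarrow> nat) \<Rightarrow> (nat \<times> nat) set" where
  "tails n dout = {(i, a). i < n \<and> a < dout i}"

definition heads :: "nat \<Rightarrow> (nat \<Rightarrow> nat) \<Rightarrow> (nat \<times> nat) set" where
  "heads n din = {(j, b). j < n \<and> b < din j}"

definition Delta :: "nat \<Rightarrow> (nat \<Rightarrow> nat) \<Rightarrow> (nat \<Rightarrow> nat) \<Rightarrow> nat" where
  "Delta n din dout = Max (din ` {..<n} \<union> dout ` {..<n})"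

definition hpar :: "nat \<Rightarrow> (nat \<Rightarrow> nat) \<Rightarrow> (nat \<Rightarrow> nat) \<Rightarrow> int" where
  "hpar n din dout = \<lfloor>ln (real n) / (10 * ln (real (Delta n din dout)))\<rfloor>"

definition wmin :: "nat \<Rightarrow> real" where
  "wmin n = ln (real n) / real n"

text \<open>State of the exploration. tree: vertex set of T; mtl / mhd: matched tails / heads;
  hgt v, wt v: number of vertices on the (unique) path in T from the root to v (v included)
  and the inverse product of the out-degrees of these vertices; these are the height and
  weight of every tail of v. steps: the selected tails e_1, e_2, ... together with their
  weights at the time of selection.\<close>

record xstate =
  tree :: "nat set"
  mtl :: "(nat \<times> nat) set"
  mhd :: "(nat \<times> nat) set"
  hgt :: "nat \<Rightarrow> nat"
  wt :: "nat \<Rightarrow> real"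
  steps :: "((nat \<times> nat) \<times> real) list"

definition expl_init :: "(nat \<Rightarrow> nat) \<Rightarrow> nat \<Rightarrow> xstate" where
  "expl_init dout i = \<lparr> tree = {i}, mtl = {}, mhd = {}, hgt = (\<lambda>_. 0)(i := 1),
     wt = (\<lambda>_. 0)(i := 1 / real (dout i)), steps = [] \<rparr>"

definition bd_out :: "nat \<Rightarrow> (nat \<Rightarrow> nat) \<Rightarrow> xstate \<Rightarrow> (nat \<times> nat) set" where
  "bd_out n dout s = {e \<in> tails n dout. fst e \<in> tree s \<and> e \<notin> mtl s}"

definition eligible :: "nat \<Rightarrow> (nat \<Rightarrow> nat) \<Rightarrow> (nat \<Rightarrow> nat) \<Rightarrow> nat \<Rightarrow> xstate \<Rightarrow> (nat \<times> nat) set" where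
  "eligible n din dout t s = {e \<in> bd_out n dout s.
      int (hgt s (fst e)) < int t - hpar n din dout \<and> wt s (fst e) > wmin n}"

definition selected :: "nat \<Rightarrow> (nat \<Rightarrow> nat) \<Rightarrow> (nat \<Rightarrow> nat) \<Rightarrow> nat \<Rightarrow> (nat \<times> nat \<Rightarrow> nat)
    \<Rightarrow> xstate \<Rightarrow> nat \<times> nat \<Rightarrow> bool" where
  "selected n din dout t rk s e \<longleftrightarrow> e \<in> eligible n din dout t s \<and>
     (\<forall>e' \<in> eligible n din dout t s. wt s (fst e') < wt s (fst e) \<or>
        (wt s (fst e') = wt s (fst e) \<and> rk e \<le> rk e'))"

text \<open>One step: match the selected tail e to an (arbitrary, i.e. any possible outcome of
  the uniform choice) unmatched head f; if the vertex of f is not in T (i.e. f is not in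
  \<partial>_- T), add the arc ef and the vertex of f to T.\<close>
definition expl_step :: "nat \<Rightarrow> (nat \<Rightarrow> nat) \<Rightarrow> (nat \<Rightarrow> nat) \<Rightarrow> nat \<Rightarrow> (nat \<times> nat \<Rightarrow> nat)
    \<Rightarrow> xstate \<Rightarrow> xstate \<Rightarrow> bool" where
  "expl_step n din dout t rk s s' \<longleftrightarrow> (\<exists>e f. selected n din dout t rk s e \<and>
     f \<in> heads n din - mhd s \<and>
     s' = (let b = s\<lparr> mtl := insert e (mtl s), mhd := insert f (mhd s),
                      steps := steps s @ [(e, wt s (fst e))] \<rparr>
           in if fst f \<in> tree s then b
              else b\<lparr> tree := insert (fst f) (tree s),
                      hgt := (hgt s)(fst f := hgt s (fst e) + 1),
                      wt := (wt s)(fst f := wt s (fst e) / real (dout (fst f))) \<rparr>))"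

definition expl_stop :: "nat \<Rightarrow> (nat \<Rightarrow> nat) \<Rightarrow> (nat \<Rightarrow> nat) \<Rightarrow> nat \<Rightarrow> xstate \<Rightarrow> bool" where
  "expl_stop n din dout t s \<longleftrightarrow> eligible n din dout t s = {}"

end

theory Submission
  imports Defs
begin

definition tof :: "nat \<Rightarrow> (nat\<Rightarrow>nat) \<Rightarrow> nat set \<Rightarrow> (nat\<times>nat) set" where
  "tof n dout V = {e\<in>tails n dout. fst e \<in> V}"

lemma tof_Sigma: "V \<subseteq> {..<n} \<Longrightarrow> tof n dout V = Sigma V (\<lambda>v. {..<dout v})"
  by (auto simp: tof_def tails_def)

lemma finite_tails: "finite (tails n dout)"
proof -
  have "tails n dout \<subseteq> Sigma {..<n} (\<lambda>v. {..<dout v})" by (auto simp: tails_def)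
  then show ?thesis by (rule finite_subset) auto
qed

lemma finite_tof: "finite (tof n dout V)"
  by (rule finite_subset[OF _ finite_tails[of n dout]]) (auto simp: tof_def)

lemma card_tof: "V \<subseteq> {..<n} \<Longrightarrow> card (tof n dout V) = (\<Sum>v\<in>V. dout v)"
  using finite_subset[of V "{..<n}"] by (simp add: tof_Sigma)

lemma sum_tof: "V \<subseteq> {..<n} \<Longrightarrow> (\<Sum>e\<in>tof n dout V. g (fst e)) = (\<Sum>v\<in>V. real (dout v) * g v)"
proof -
  assume V: "V \<subseteq> {..<n}"
  then have fin: "finite V" using finite_subset by blast
  have "(\<Sum>v\<in>V. real (dout v) * g v) = (\<Sum>v\<in>V. \<Sum>b\<in>{..<dout v}. g v)" by simp
  also have "\<dots> = (\<Sum>(v,b)\<in>Sigma V (\<lambda>v. {..<dout v}). g v)"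
    using fin by (subst sum.Sigma) auto
  also have "\<dots> = (\<Sum>e\<in>tof n dout V. g (fst e))"
    using V by (simp add: tof_Sigma split_beta)
  finally show ?thesis by simp
qed

lemma sorted_last_le: "sorted_wrt (\<lambda>a b. b \<le> a) (xs::real list) \<Longrightarrow> y \<in> set xs \<Longrightarrow> last xs \<le> y"
proof (induction xs)
  case Nil then show ?case by simp
next
  case (Cons a xs)
  show ?case
  proof (cases "xs = []")
    case True then show ?thesis using Cons by simp
  next
    case False
    then have "last xs \<in> set xs" by simp
    then show ?thesis using Cons False by auto
  qed
qed

lemma arith_aux: "lo + t = (L::nat) + 1 \<Longrightarrow> u + L = S \<Longrightarrow> t = a + b \<Longrightarrow> 2 * a \<le> S \<Longrightarrow> 1 \<le> u \<Longrightarrow> L + 3 \<le> 2 * (u + b + lo)"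
proof -
  assume h: "lo + t = L + 1" "u + L = S" "t = a + b" "2 * a \<le> S" "1 \<le> u"
  have "2 * (u + b + lo) = 2 * u + 2 * L + 2 - 2 * a" using h by simp
  then show ?thesis using h by simp
qed

definition Inv :: "nat \<Rightarrow> (nat\<Rightarrow>nat) \<Rightarrow> (nat\<Rightarrow>nat) \<Rightarrow> nat \<Rightarrow> nat \<Rightarrow> xstate \<Rightarrow> bool" where
 "Inv n din dout t i s \<longleftrightarrow>
   i \<in> tree s \<and> tree s \<subseteq> {..<n} \<and>
   mtl s \<subseteq> tails n dout \<and> (\<forall>e\<in>mtl s. fst e \<in> tree s) \<and>
   mtl s = fst ` set (steps s) \<and> distinct (map fst (steps s)) \<and>
   (\<forall>p\<in>set (steps s). snd p = wt s (fst (fst p))) \<and>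
   sorted_wrt (\<lambda>a b. b \<le> a) (map snd (steps s)) \<and>
   (\<forall>p\<in>set (steps s). wmin n < snd p) \<and>
   (\<forall>v\<in>tree s. 0 < wt s v \<and> wt s v \<le> wt s i) \<and>
   (steps s \<noteq> [] \<longrightarrow> (\<forall>e\<in>eligible n din dout t s. wt s (fst e) \<le> snd (last (steps s)))) \<and>
   (\<forall>k\<in>{1..length (steps s)}. snd (steps s ! (k - 1)) \<le> 2 / (real k + 2)) \<and>
   (\<exists>p. inj_on p (tree s - {i}) \<and> p ` (tree s - {i}) \<subseteq> {..<length (steps s)} \<and>
        (\<forall>v\<in>tree s - {i}. snd (steps s ! p v) = real (dout v) * wt s v) \<and>
        (\<Sum>e\<in>bd_out n dout s. wt s (fst e)) +
          (\<Sum>j\<in>{..<length (steps s)} - p ` (tree s - {i}). snd (steps s ! j)) = 1)"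

lemma count_bound:
  assumes inv: "Inv n din dout t i s" and deg: "\<forall>j<n. 2 \<le> dout j"
    and e: "e \<in> bd_out n dout s" and w: "w = wt s (fst e)" and wpos: "0 < w"
    and wle: "\<forall>x\<in>set (map snd (steps s)). w \<le> x"
  shows "(real (length (steps s)) + 3) * w \<le> 2"
proof -
  define T where "T = tree s"
  define M where "M = mtl s"
  define L where "L = length (steps s)"
  define A where "A = {v\<in>T. w \<le> wt s v}"
  define B where "B = {v\<in>T - {i}. wt s v < w}"
  obtain p where iT: "i \<in> T" and Tn: "T \<subseteq> {..<n}" and Mt: "M \<subseteq> tails n dout"
     and MT: "\<forall>e\<in>M. fst e \<in> T"
     and Mst: "M = fst ` set (steps s)" and dist: "distinct (map fst (steps s))"
     and wst: "\<forall>p\<in>set (steps s). snd p = wt s (fst (fst p))"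
     and wtT: "\<forall>v\<in>T. 0 < wt s v \<and> wt s v \<le> wt s i"
     and pinj: "inj_on p (T - {i})" and prng: "p ` (T - {i}) \<subseteq> {..<L}"
     and pw: "\<forall>v\<in>T - {i}. snd (steps s ! p v) = real (dout v) * wt s v"
     and sumeq: "(\<Sum>e\<in>bd_out n dout s. wt s (fst e)) + (\<Sum>j\<in>{..<L} - p ` (T - {i}). snd (steps s ! j)) = 1"
    using inv unfolding Inv_def T_def M_def L_def by (elim conjE exE) blast
  have finT: "finite T" using Tn finite_subset by blast
  have eT: "fst e \<in> T" and eM: "e \<notin> M" and etl: "e \<in> tails n dout"
    using e by (auto simp: bd_out_def T_def M_def)
  have iA: "i \<in> A" using wtT eT iT w by (auto simp: A_def)
  have TAB: "T = A \<union> B" using iA by (auto simp: A_def B_def)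
  have ABdisj: "A \<inter> B = {}" by (auto simp: A_def B_def)
  have finA: "finite A" and finB: "finite B" using finT TAB by auto
  have cardT: "card T = card A + card B" using finA finB TAB ABdisj card_Un_disjoint by metis
  have An: "A \<subseteq> {..<n}" and Bn: "B \<subseteq> {..<n}" using Tn TAB by auto
  have MA: "M \<subseteq> tof n dout A"
  proof
    fix e' assume "e' \<in> M"
    then obtain q where q: "q \<in> set (steps s)" "e' = fst q" using Mst by auto
    have "w \<le> snd q" using wle q by auto
    also have "snd q = wt s (fst e')" using wst q by auto
    finally show "e' \<in> tof n dout A" using \<open>e' \<in> M\<close> Mt MT by (auto simp: tof_def A_def)
  qed
  have cardM: "card M = L"
  proof -
    have "card (set (map fst (steps s))) = length (map fst (steps s))"
      using dist distinct_card by blast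
    then show ?thesis using Mst by (simp add: L_def)
  qed
  have bdT: "bd_out n dout s = tof n dout T - M" by (auto simp: bd_out_def tof_def T_def M_def)
  define U where "U = tof n dout A - M"
  have LsumA: "L \<le> (\<Sum>v\<in>A. dout v)"
    using card_mono[OF finite_tof MA] cardM card_tof[OF An] by simp
  have cardU: "card U = (\<Sum>v\<in>A. dout v) - L"
    unfolding U_def using card_Diff_subset[OF finite_subset[OF MA finite_tof] MA] cardM card_tof[OF An]
    by simp
  have sumA2: "2 * card A \<le> (\<Sum>v\<in>A. dout v)"
  proof -
    have "(\<Sum>v\<in>A. 2) \<le> (\<Sum>v\<in>A. dout v)" using An deg by (intro sum_mono) auto
    then show ?thesis by simp
  qed
  have eU: "e \<in> U" using etl eT eM w by (auto simp: U_def tof_def A_def)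
  have U1: "1 \<le> card U"
  proof -
    have "finite U" unfolding U_def using finite_tof by blast
    then have "card U > 0" using eU card_gt_0_iff by blast
    then show ?thesis by simp
  qed
  have tofB: "tof n dout B \<subseteq> bd_out n dout s"
    using MA ABdisj TAB by (auto simp: bdT tof_def)
  have UB: "U \<inter> tof n dout B = {}" using ABdisj by (auto simp: U_def tof_def)
  have Ubd: "U \<subseteq> bd_out n dout s" using TAB by (auto simp: U_def bdT tof_def)
  have finbd: "finite (bd_out n dout s)" by (simp add: bdT finite_tof)
  have pos_bd: "\<forall>e\<in>bd_out n dout s. 0 \<le> wt s (fst e)"
    using wtT by (auto simp: bdT tof_def less_imp_le)
  have S1: "(\<Sum>e\<in>U. wt s (fst e)) + (\<Sum>e\<in>tof n dout B. wt s (fst e)) \<le> (\<Sum>e\<in>bd_out n dout s. wt s (fst e))"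
  proof -
    have "(\<Sum>e\<in>U. wt s (fst e)) + (\<Sum>e\<in>tof n dout B. wt s (fst e)) = (\<Sum>e\<in>U \<union> tof n dout B. wt s (fst e))"
      using UB by (intro sum.union_disjoint[symmetric]) (auto simp: U_def finite_tof)
    also have "\<dots> \<le> (\<Sum>e\<in>bd_out n dout s. wt s (fst e))"
      using Ubd tofB pos_bd finbd by (intro sum_mono2) auto
    finally show ?thesis .
  qed
  have S2: "w * card U \<le> (\<Sum>e\<in>U. wt s (fst e))"
  proof -
    have "(\<Sum>e\<in>U. w) \<le> (\<Sum>e\<in>U. wt s (fst e))"
      by (intro sum_mono) (auto simp: U_def tof_def A_def)
    then show ?thesis by (simp add: mult.commute)
  qed
  have S3: "(\<Sum>e\<in>tof n dout B. wt s (fst e)) = (\<Sum>v\<in>B. real (dout v) * wt s v)"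
    using sum_tof[OF Bn] .
  have S4: "w * card B \<le> (\<Sum>v\<in>B. real (dout v) * wt s v)"
  proof -
    have "(\<Sum>v\<in>B. w) \<le> (\<Sum>v\<in>B. real (dout v) * wt s v)"
    proof (intro sum_mono)
      fix v assume vB: "v \<in> B"
      then have vT: "v \<in> T - {i}" by (auto simp: B_def)
      then have "p v < L" using prng by auto
      then have "steps s ! p v \<in> set (steps s)" by (simp add: L_def)
      then have "w \<le> snd (steps s ! p v)" using wle by auto
      then show "w \<le> real (dout v) * wt s v" using pw vT by auto
    qed
    then show ?thesis by (simp add: mult.commute)
  qed
  define Lo where "Lo = {..<L} - p ` (T - {i})"
  have cardimg: "card (p ` (T - {i})) = card T - 1"
    using card_image[OF pinj] iT finT by simp
  have cardLo: "card Lo = L - (card T - 1)"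
    unfolding Lo_def using card_Diff_subset[OF finite_subset[OF prng] prng] cardimg by simp
  have LT: "card T - 1 \<le> L" using card_mono[OF _ prng] cardimg by simp
  have S5: "w * card Lo \<le> (\<Sum>j\<in>Lo. snd (steps s ! j))"
  proof -
    have "(\<Sum>j\<in>Lo. w) \<le> (\<Sum>j\<in>Lo. snd (steps s ! j))"
    proof (intro sum_mono)
      fix j assume "j \<in> Lo"
      then have "j < L" by (auto simp: Lo_def)
      then have "steps s ! j \<in> set (steps s)" by (simp add: L_def)
      then show "w \<le> snd (steps s ! j)" using wle by auto
    qed
    then show ?thesis by (simp add: mult.commute)
  qed
  have tot: "w * (card U + card B + card Lo) \<le> 1"
    using S1 S2 S3 S4 S5 sumeq unfolding Lo_def[symmetric] by (simp add: distrib_left)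
  have cT1: "1 \<le> card T"
  proof -
    have "card T > 0" using iT finT card_gt_0_iff by blast
    then show ?thesis by simp
  qed
  have nat: "L + 3 \<le> 2 * (card U + card B + card Lo)"
  proof -
    have a: "card Lo + card T = L + 1" using cardLo LT cT1 by linarith
    have b: "card U + L = (\<Sum>v\<in>A. dout v)" using cardU LsumA by linarith
    show ?thesis using arith_aux[OF a b cardT sumA2 U1] .
  qed
  then have "real L + 3 \<le> 2 * real (card U + card B + card Lo)" by linarith
  then have "(real L + 3) * w \<le> 2 * real (card U + card B + card Lo) * w"
    using wpos by (intro mult_right_mono) auto
  also have "\<dots> = 2 * (w * real (card U + card B + card Lo))" by (simp only: mult_ac)
  also have "\<dots> \<le> 2" using tot by linarith
  finally show ?thesis by (simp add: L_def)
qed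

lemma init_inv:
  assumes "i < n" and deg: "\<forall>j<n. 2 \<le> dout j"
  shows "Inv n din dout t i (expl_init dout i)"
proof -
  have d: "2 \<le> dout i" using assms by auto
  have bd: "bd_out n dout (expl_init dout i) = tof n dout {i}"
    by (auto simp: bd_out_def tof_def expl_init_def)
  have "(\<Sum>e\<in>bd_out n dout (expl_init dout i). wt (expl_init dout i) (fst e))
        = (\<Sum>v\<in>{i}. real (dout v) * wt (expl_init dout i) v)"
    unfolding bd using assms by (intro sum_tof) auto
  also have "\<dots> = 1" using d by (simp add: expl_init_def)
  finally have "(\<Sum>e\<in>bd_out n dout (expl_init dout i). wt (expl_init dout i) (fst e)) = 1" .
  then show ?thesis using assms d
    unfolding Inv_def by (auto simp: expl_init_def intro!: exI[of _ "\<lambda>_. 0"])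
qed

lemma step_inv:
  assumes inv: "Inv n din dout t i s" and deg: "\<forall>j<n. 2 \<le> din j \<and> 2 \<le> dout j" and iN: "i < n"
    and st: "expl_step n din dout t rk s s'"
  shows "Inv n din dout t i s'"
proof -
  obtain e f where sel: "selected n din dout t rk s e" and fH: "f \<in> heads n din - mhd s"
    and s'def: "s' = (if fst f \<in> tree s
       then s\<lparr> mtl := insert e (mtl s), mhd := insert f (mhd s),
                      steps := steps s @ [(e, wt s (fst e))] \<rparr>
       else s\<lparr> mtl := insert e (mtl s), mhd := insert f (mhd s),
                      steps := steps s @ [(e, wt s (fst e))],
               tree := insert (fst f) (tree s),
               hgt := (hgt s)(fst f := hgt s (fst e) + 1),
               wt := (wt s)(fst f := wt s (fst e) / real (dout (fst f))) \<rparr>)"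
    using st unfolding expl_step_def Let_def by auto
  define x where "x = wt s (fst e)"
  define v where "v = fst f"
  define L where "L = length (steps s)"
  obtain p where iT: "i \<in> tree s" and Tn: "tree s \<subseteq> {..<n}" and Mt: "mtl s \<subseteq> tails n dout"
     and MT: "\<forall>e\<in>mtl s. fst e \<in> tree s"
     and Mst: "mtl s = fst ` set (steps s)" and dist: "distinct (map fst (steps s))"
     and wst: "\<forall>p\<in>set (steps s). snd p = wt s (fst (fst p))"
     and srt: "sorted_wrt (\<lambda>a b. b \<le> a) (map snd (steps s))"
     and wmn: "\<forall>p\<in>set (steps s). wmin n < snd p"
     and wtT: "\<forall>v\<in>tree s. 0 < wt s v \<and> wt s v \<le> wt s i"
     and lastb: "steps s \<noteq> [] \<longrightarrow> (\<forall>e\<in>eligible n din dout t s. wt s (fst e) \<le> snd (last (steps s)))"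
     and bnd: "\<forall>k\<in>{1..L}. snd (steps s ! (k - 1)) \<le> 2 / (real k + 2)"
     and pinj: "inj_on p (tree s - {i})" and prng: "p ` (tree s - {i}) \<subseteq> {..<L}"
     and pw: "\<forall>v\<in>tree s - {i}. snd (steps s ! p v) = real (dout v) * wt s v"
     and sumeq: "(\<Sum>e\<in>bd_out n dout s. wt s (fst e)) + (\<Sum>j\<in>{..<L} - p ` (tree s - {i}). snd (steps s ! j)) = 1"
    using inv unfolding Inv_def L_def by (elim conjE exE) blast
  have eel: "e \<in> eligible n din dout t s" using sel by (simp add: selected_def)
  have ebd: "e \<in> bd_out n dout s" using eel by (simp add: eligible_def)
  have etl: "e \<in> tails n dout" and eT: "fst e \<in> tree s" and eM: "e \<notin> mtl s"
    using ebd by (auto simp: bd_out_def)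
  have xw: "wmin n < x" using eel by (simp add: eligible_def x_def)
  have wmin0: "0 \<le> wmin n" using iN by (simp add: wmin_def)
  have xpos: "0 < x" using xw wmin0 by linarith
  have selmax: "\<And>e'. e' \<in> eligible n din dout t s \<Longrightarrow> wt s (fst e') \<le> x"
    using sel unfolding selected_def x_def by force
  have xall: "\<forall>y\<in>set (map snd (steps s)). x \<le> y"
  proof
    fix y assume y: "y \<in> set (map snd (steps s))"
    then have ne: "steps s \<noteq> []" by auto
    have "x \<le> snd (last (steps s))" using lastb ne eel by (simp add: x_def)
    also have "snd (last (steps s)) = last (map snd (steps s))" using ne by (simp add: last_map)
    also have "\<dots> \<le> y" using sorted_last_le[OF srt y] .
    finally show "x \<le> y" .
  qed
  have cb: "(real L + 3) * x \<le> 2"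
    using count_bound[OF inv _ ebd x_def xpos xall] deg by (simp add: L_def)
  have xb: "x \<le> 2 / (real (Suc L) + 2)"
  proof -
    have "x * (real (Suc L) + 2) \<le> 2" using cb by (simp add: algebra_simps)
    then show ?thesis by (simp add: field_simps)
  qed
  have vn: "v < n" using fH by (auto simp: heads_def v_def)
  have dv: "2 \<le> dout v" using deg vn by auto
  have MeT: "mtl s = fst ` set (steps s)" using Mst .
  have steps_old: "\<And>j. j < L \<Longrightarrow> (steps s @ [(e, x)]) ! j = steps s ! j"
    by (simp add: nth_append L_def)
  have steps_new: "(steps s @ [(e, x)]) ! L = (e, x)" by (simp add: L_def)
  have bnd': "\<forall>k\<in>{1..Suc L}. snd ((steps s @ [(e, x)]) ! (k - 1)) \<le> 2 / (real k + 2)"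
  proof
    fix k assume k: "k \<in> {1..Suc L}"
    show "snd ((steps s @ [(e, x)]) ! (k - 1)) \<le> 2 / (real k + 2)"
    proof (cases "k = Suc L")
      case True then show ?thesis using xb steps_new by simp
    next
      case False then have "k - 1 < L" "k \<in> {1..L}" using k by auto
      then show ?thesis using bnd steps_old by simp
    qed
  qed
  have srt': "sorted_wrt (\<lambda>a b. b \<le> a) (map snd (steps s @ [(e, x)]))"
    using srt xall by (simp add: sorted_wrt_append)
  have dist': "distinct (map fst (steps s @ [(e, x)]))" using dist eM Mst by auto
  have Lo_sum: "(\<Sum>j\<in>K. snd ((steps s @ [(e, x)]) ! j)) = (\<Sum>j\<in>K. snd (steps s ! j))"
    if "K \<subseteq> {..<L}" for K
    using that steps_old by (intro sum.cong) auto
  show ?thesis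
  proof (cases "v \<in> tree s")
    case True
    then have s': "s' = s\<lparr> mtl := insert e (mtl s), mhd := insert f (mhd s),
                      steps := steps s @ [(e, x)] \<rparr>" using s'def by (simp add: v_def x_def)
    have bd': "bd_out n dout s' = bd_out n dout s - {e}" by (auto simp: s' bd_out_def)
    have el': "eligible n din dout t s' \<subseteq> eligible n din dout t s"
      by (auto simp: s' eligible_def bd_out_def)
    define Lo where "Lo = {..<L} - p ` (tree s - {i})"
    have Lo': "{..<Suc L} - p ` (tree s - {i}) = insert L Lo" using prng by (auto simp: Lo_def)
    have LLo: "L \<notin> Lo" by (simp add: Lo_def)
    have finbd: "finite (bd_out n dout s)"
      by (rule finite_subset[OF _ finite_tails[of n dout]]) (auto simp: bd_out_def)
    have sum1: "(\<Sum>e\<in>bd_out n dout s - {e}. wt s (fst e)) = (\<Sum>e\<in>bd_out n dout s. wt s (fst e)) - x"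
      using sum_diff1[OF finbd, of "\<lambda>e. wt s (fst e)" e] ebd by (simp add: x_def)
    have sum2: "(\<Sum>j\<in>insert L Lo. snd ((steps s @ [(e, x)]) ! j)) = x + (\<Sum>j\<in>Lo. snd (steps s ! j))"
      using LLo Lo_sum[of Lo] steps_new by (simp add: Lo_def)
    have peq: "(\<Sum>e\<in>bd_out n dout s'. wt s' (fst e)) +
          (\<Sum>j\<in>{..<length (steps s')} - p ` (tree s' - {i}). snd (steps s' ! j)) = 1"
      using sumeq sum1 sum2 Lo' unfolding bd' by (simp add: s' L_def Lo_def)
    show ?thesis unfolding Inv_def
    proof (intro conjI)
      show "\<exists>p. inj_on p (tree s' - {i}) \<and> p ` (tree s' - {i}) \<subseteq> {..<length (steps s')} \<and>
        (\<forall>v\<in>tree s' - {i}. snd (steps s' ! p v) = real (dout v) * wt s' v) \<and>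
        (\<Sum>e\<in>bd_out n dout s'. wt s' (fst e)) +
          (\<Sum>j\<in>{..<length (steps s')} - p ` (tree s' - {i}). snd (steps s' ! j)) = 1"
      proof (intro exI conjI)
        show "inj_on p (tree s' - {i})" using pinj by (simp add: s')
        show "p ` (tree s' - {i}) \<subseteq> {..<length (steps s')}" using prng by (auto simp: s' L_def)
        show "\<forall>v\<in>tree s' - {i}. snd (steps s' ! p v) = real (dout v) * wt s' v"
        proof
          fix u assume u: "u \<in> tree s' - {i}"
          then have u': "u \<in> tree s - {i}" by (simp add: s')
          then have "p u < L" using prng by auto
          then show "snd (steps s' ! p u) = real (dout u) * wt s' u"
            using pw u' steps_old by (simp add: s')
        qed
      qed (rule peq)
      show "steps s' \<noteq> [] \<longrightarrow> (\<forall>e\<in>eligible n din dout t s'. wt s' (fst e) \<le> snd (last (steps s')))"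
        using el' selmax by (auto simp: s')
    qed (use iT Tn Mt MT Mst etl eT eM wst srt' wmn xw wtT bnd' dist' in \<open>auto simp: s' x_def L_def\<close>)
  next
    case False
    define s'' where "s'' = s'"
    have s': "s' = s\<lparr> mtl := insert e (mtl s), mhd := insert f (mhd s),
                      steps := steps s @ [(e, x)],
               tree := insert v (tree s),
               hgt := (hgt s)(v := hgt s (fst e) + 1),
               wt := (wt s)(v := x / real (dout v)) \<rparr>" using s'def False by (simp add: v_def x_def)
    have vi: "v \<noteq> i" using False iT by auto
    have ev: "fst e \<noteq> v" using False eT by auto
    have tofv: "tof n dout {v} \<inter> (bd_out n dout s - {e}) = {}" using False by (auto simp: tof_def bd_out_def)
    have bd': "bd_out n dout s' = (bd_out n dout s - {e}) \<union> tof n dout {v}"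
      using False MT eT by (auto simp: s' bd_out_def tof_def)
    have el': "e' \<in> eligible n din dout t s'  \<Longrightarrow> fst e' \<noteq> v \<Longrightarrow> e' \<in> eligible n din dout t s" for e'
      by (auto simp: s' eligible_def bd_out_def)
    have wv: "wt s' v = x / real (dout v)" by (simp add: s')
    have wvle: "x / real (dout v) \<le> x" using xpos dv by (simp add: divide_le_eq)
    have wvpos: "0 < x / real (dout v)" using xpos dv by simp
    define p' where "p' = p(v := L)"
    define Lo where "Lo = {..<L} - p ` (tree s - {i})"
    have T': "tree s' - {i} = insert v (tree s - {i})" using vi by (auto simp: s')
    have img: "p' ` (tree s' - {i}) = insert L (p ` (tree s - {i}))"
      unfolding T' p'_def using False by auto
    have Lo': "{..<Suc L} - p' ` (tree s' - {i}) = Lo" unfolding img Lo_def using prng by auto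
    have finbd: "finite (bd_out n dout s)"
      by (rule finite_subset[OF _ finite_tails[of n dout]]) (auto simp: bd_out_def)
    have sum1: "(\<Sum>e'\<in>bd_out n dout s - {e}. wt s' (fst e')) = (\<Sum>e\<in>bd_out n dout s. wt s (fst e)) - x"
    proof -
      have "(\<Sum>e'\<in>bd_out n dout s - {e}. wt s' (fst e')) = (\<Sum>e'\<in>bd_out n dout s - {e}. wt s (fst e'))"
        using False by (intro sum.cong) (auto simp: s' bd_out_def)
      also have "\<dots> = (\<Sum>e\<in>bd_out n dout s. wt s (fst e)) - x"
        using sum_diff1[OF finbd, of "\<lambda>e. wt s (fst e)" e] ebd by (simp add: x_def)
      finally show ?thesis .
    qed
    have sum2: "(\<Sum>e'\<in>tof n dout {v}. wt s' (fst e')) = x"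
    proof -
      have dv0: "real (dout v) \<noteq> 0" using dv by simp
      have "(\<Sum>e'\<in>tof n dout {v}. wt s' (fst e')) = real (dout v) * wt s' v"
        using sum_tof[where V="{v}" and n=n and dout=dout and g="wt s'"] vn by simp
      also have "\<dots> = x" using wv dv0 by simp
      finally show ?thesis .
    qed
    have tofv2: "(bd_out n dout s - {e}) \<inter> tof n dout {v} = {}" using tofv by blast
    have sum3: "(\<Sum>e'\<in>bd_out n dout s'. wt s' (fst e')) = (\<Sum>e\<in>bd_out n dout s. wt s (fst e)) - x + x"
      unfolding bd' sum.union_disjoint[OF finite_Diff[OF finbd] finite_tof tofv2] sum1 sum2 ..
    have peq: "(\<Sum>e\<in>bd_out n dout s'. wt s' (fst e)) +
          (\<Sum>j\<in>{..<length (steps s')} - p' ` (tree s' - {i}). snd (steps s' ! j)) = 1"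
    proof -
      have "length (steps s') = Suc L" by (simp add: s' L_def)
      then have "(\<Sum>j\<in>{..<length (steps s')} - p' ` (tree s' - {i}). snd (steps s' ! j))
           = (\<Sum>j\<in>Lo. snd (steps s ! j))" using Lo' Lo_sum[of Lo] by (simp add: s' Lo_def)
      then show ?thesis using sum3 sumeq by (simp add: Lo_def)
    qed
    show ?thesis unfolding Inv_def
    proof (intro conjI)
      show "\<exists>p. inj_on p (tree s' - {i}) \<and> p ` (tree s' - {i}) \<subseteq> {..<length (steps s')} \<and>
        (\<forall>v\<in>tree s' - {i}. snd (steps s' ! p v) = real (dout v) * wt s' v) \<and>
        (\<Sum>e\<in>bd_out n dout s'. wt s' (fst e)) +
          (\<Sum>j\<in>{..<length (steps s')} - p ` (tree s' - {i}). snd (steps s' ! j)) = 1"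
      proof (intro exI[of _ p'] conjI)
        show "inj_on p' (tree s' - {i})" unfolding T' p'_def
          using pinj prng False by (auto simp: inj_on_def)
        show "p' ` (tree s' - {i}) \<subseteq> {..<length (steps s')}" unfolding img using prng by (auto simp: s' L_def)
        show "\<forall>u\<in>tree s' - {i}. snd (steps s' ! p' u) = real (dout u) * wt s' u"
        proof
          fix u assume u: "u \<in> tree s' - {i}"
          show "snd (steps s' ! p' u) = real (dout u) * wt s' u"
          proof (cases "u = v")
            case True then show ?thesis using steps_new dv by (simp add: s' p'_def)
          next
            case False
            then have "u \<in> tree s - {i}" using u by (simp add: s')
            then show ?thesis using False pw prng steps_old by (auto simp: s' p'_def)
          qed
        qed
      qed (rule peq)
      show "steps s' \<noteq> [] \<longrightarrow> (\<forall>e\<in>eligible n din dout t s'. wt s' (fst e) \<le> snd (last (steps s')))"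
      proof (intro impI ballI)
        fix e' assume e': "e' \<in> eligible n din dout t s'"
        show "wt s' (fst e') \<le> snd (last (steps s'))"
        proof (cases "fst e' = v")
          case True then show ?thesis using wvle by (simp add: s')
        next
          case False then show ?thesis using el'[OF e' False] selmax by (simp add: s')
        qed
      qed
      show "mtl s' \<subseteq> tails n dout" using Mt etl by (simp add: s')
      show "\<forall>e\<in>mtl s'. fst e \<in> tree s'" using MT eT by (simp add: s')
      show "\<forall>q\<in>set (steps s'). snd q = wt s' (fst (fst q))"
        using wst MT Mst False ev by (auto simp: s' x_def)
      show "\<forall>u\<in>tree s'. 0 < wt s' u \<and> wt s' u \<le> wt s' i"
        using wtT vi wvpos wvle eT by (force simp: s' x_def)
    qed (use iT Tn vn Mst srt' wmn xw bnd' dist' in \<open>auto simp: s' x_def L_def\<close>)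
  qed
qed

theorem lemma3:
  fixes n m t :: nat and din dout :: "nat \<Rightarrow> nat" and rk :: "nat \<times> nat \<Rightarrow> nat"
    and i :: nat and s :: xstate
  assumes "i < n"
    and "(\<Sum>j<n. din j) = m" and "(\<Sum>j<n. dout j) = m"
    and "\<forall>j<n. 2 \<le> din j \<and> 2 \<le> dout j"
    and "0 < t"
    and "inj_on rk (tails n dout)"
    and "(expl_step n din dout t rk)\<^sup>*\<^sup>* (expl_init dout i) s"
    and "expl_stop n din dout t s"
  shows "(\<forall>k\<in>{1..length (steps s)}. snd (steps s ! (k - 1)) \<le> 2 / (real k + 2))
         \<and> real (length (steps s)) * ln (real n) \<le> 2 * real n"
proof -
  have inv: "Inv n din dout t i s"
    using assms(7)
  proof (induction rule: rtranclp_induct)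
    case base then show ?case using init_inv assms(1,4) by blast
  next
    case (step y z) then show ?case using step_inv assms(1,4) by blast
  qed
  have b: "\<forall>k\<in>{1..length (steps s)}. snd (steps s ! (k - 1)) \<le> 2 / (real k + 2)"
    and wm: "\<forall>p\<in>set (steps s). wmin n < snd p"
    using inv unfolding Inv_def by blast+
  have ln0: "0 \<le> ln (real n)" using assms(1) by simp
  have "real (length (steps s)) * ln (real n) \<le> 2 * real n"
  proof (cases "steps s = []")
    case True then show ?thesis using assms(1) by simp
  next
    case False
    define L where "L = length (steps s)"
    have L1: "L \<ge> 1" using False by (simp add: L_def Suc_le_eq)
    have "steps s ! (L - 1) \<in> set (steps s)" using L1 by (simp add: L_def)
    then have "wmin n < snd (steps s ! (L - 1))" using wm by blast
    also have "\<dots> \<le> 2 / (real L + 2)" using b L1 by (simp add: L_def)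
    finally have "ln (real n) / real n < 2 / (real L + 2)" by (simp add: wmin_def)
    then have "ln (real n) * (real L + 2) < 2 * real n"
      using assms(1) by (simp add: field_simps)
    then have "real L * ln (real n) \<le> 2 * real n" using ln0 by (simp add: algebra_simps)
    then show ?thesis by (simp add: L_def)
  qed
  with b show ?thesis by blast
qed

end
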